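(* Let $\Bbbk$ be a unital ring, $n,r$ positive integers, $\varepsilon\in\{0,1/2\}$, $d=n-2\varepsilon$, and assume $d>r+1$. Then the kernel of $\Phi_{n,r+\varepsilon}:\Bbbk W_d\to\operatorname{End}_\Bbbk(\mathbf V^{\otimes r})$ contains the cell ideal $$\Bbbk\{y_{\mathfrak s\mathfrak t}\mid \mathfrak s,\mathfrak t\text{ standard},\ [\mathfrak s]=[\mathfrak t]\not\trianglelefteq(r+1,1^{d-r-1})\}$$ of $\Bbbk W_d$.
   Context: $\mathbf V$ is a free $\Bbbk$-module of rank $n$ with basis $\mathbf v_1,\dots,\mathbf v_n$. $W_n$ is the symmetric group on $\{1,\dots,n\}$, acting on $\mathbf V^{\otimes r}$ by $w(\mathbf v_{j_1}\otimes\cdots\otimes\mathbf v_{j_r})=\mathbf v_{w(j_1)}\otimes\cdots\otimes\mathbf v_{w(j_r)}$, giving $\Phi_{n,r}:\Bbbk W_n\to\operatorname{End}_\Bbbk(\mathbf V^{\otimes r})$. $W_{n-1}=\{w\in W_n:w(n)=n\}$ preserves $\mathbf V^{\otimes r}\otimes\mathbf v_n\subset\mathbf V^{\otimes(r+1)}$, identified with $\mathbf V^{\otimes r}$, giving $\Phi_{n,r+1/2}:\Bbbk W_{n-1}\to\operatorname{End}_\Bbbk(\mathbf V^{\otimes r})$. For a partition $\lambda$ of $d$: a $\lambda$-tableau is a bijective filling of the Young diagram by $1,\dots,d$; row-standard means rows increase, standard means rows and columns increase. $\mathfrak t^\lambda$ is the row-reading tableau, $W_\lambda$ its row stabiliser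 in $W_d$, $d(\mathfrak t)\in W_d$ the permutation with $\mathfrak t=d(\mathfrak t)\mathfrak t^\lambda$, $y_\lambda=\sum_{w\in W_\lambda}\operatorname{sgn}(w)w$, $y_{\mathfrak s\mathfrak t}=d(\mathfrak s)^{-1}y_\lambda d(\mathfrak t)$, and $[\mathfrak t]$ is the shape of $\mathfrak t$. $\trianglelefteq$ is the dominance order. The standard $y_{\mathfrak s\mathfrak t}$ form Murphy's cellular basis of $\Bbbk W_d$, and spans over upward-closed sets of shapes are cell ideals. *)

theory Defs
  imports Complex_Main "HOL-Combinatorics.Permutations"
begin

definition Wsym :: "nat \<Rightarrow> (nat \<Rightarrow> nat) set" where
  "Wsym d = {w. w permutes {1..d}}"

definition is_partition :: "nat \<Rightarrow> nat list \<Rightarrow> bool" where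
  "is_partition d mu \<longleftrightarrow> sorted_wrt (\<ge>) mu \<and> (\<forall>p\<in>set mu. 0 < p) \<and> sum_list mu = d"

text \<open>Young diagram (0-indexed cells (row, column)).\<close>
definition young :: "nat list \<Rightarrow> (nat \<times> nat) set" where
  "young mu = {(i, j). i < length mu \<and> j < mu ! i}"

definition tableau :: "nat \<Rightarrow> nat list \<Rightarrow> (nat \<times> nat \<Rightarrow> nat) \<Rightarrow> bool" where
  "tableau d mu t \<longleftrightarrow> bij_betw t (young mu) {1..d}"

definition standard :: "nat list \<Rightarrow> (nat \<times> nat \<Rightarrow> nat) \<Rightarrow> bool" where
  "standard mu t \<longleftrightarrow>
     (\<forall>i j. (i, j) \<in> young mu \<and> (i, Suc j) \<in> young mu \<longrightarrow> t (i, j) < t (i, Suc j)) \<and>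
     (\<forall>i j. (i, j) \<in> young mu \<and> (Suc i, j) \<in> young mu \<longrightarrow> t (i, j) < t (Suc i, j))"

definition row_reading :: "nat list \<Rightarrow> nat \<times> nat \<Rightarrow> nat" where
  "row_reading mu c = sum_list (take (fst c) mu) + snd c + 1"

text \<open>d(t): the permutation with t = d(t) t^mu.\<close>
definition dperm :: "nat \<Rightarrow> nat list \<Rightarrow> (nat \<times> nat \<Rightarrow> nat) \<Rightarrow> nat \<Rightarrow> nat" where
  "dperm d mu t = (\<lambda>k. if k \<in> {1..d} then t (inv_into (young mu) (row_reading mu) k) else k)"

definition row_stab :: "nat \<Rightarrow> nat list \<Rightarrow> (nat \<Rightarrow> nat) set" where
  "row_stab d mu = {w \<in> Wsym d. \<forall>c \<in> young mu.
      fst (inv_into (young mu) (row_reading mu) (w (row_reading mu c))) = fst c}"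

definition group_alg :: "nat \<Rightarrow> ((nat \<Rightarrow> nat) \<Rightarrow> 'k::ring_1) set" where
  "group_alg d = {x. \<forall>w. w \<notin> Wsym d \<longrightarrow> x w = 0}"

definition ga_delta :: "(nat \<Rightarrow> nat) \<Rightarrow> (nat \<Rightarrow> nat) \<Rightarrow> 'k::ring_1" where
  "ga_delta w = (\<lambda>u. if u = w then 1 else 0)"

definition ga_mult :: "nat \<Rightarrow> ((nat \<Rightarrow> nat) \<Rightarrow> 'k::ring_1) \<Rightarrow> ((nat \<Rightarrow> nat) \<Rightarrow> 'k) \<Rightarrow> (nat \<Rightarrow> nat) \<Rightarrow> 'k" where
  "ga_mult d x y = (\<lambda>u. \<Sum>v\<in>Wsym d. x v * y (inv v \<circ> u))"

definition y_lam :: "nat \<Rightarrow> nat list \<Rightarrow> (nat \<Rightarrow> nat) \<Rightarrow> 'k::ring_1" where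
  "y_lam d mu = (\<lambda>u. if u \<in> row_stab d mu then of_int (sign u) else 0)"

definition y_st :: "nat \<Rightarrow> nat list \<Rightarrow> (nat \<times> nat \<Rightarrow> nat) \<Rightarrow> (nat \<times> nat \<Rightarrow> nat) \<Rightarrow> (nat \<Rightarrow> nat) \<Rightarrow> 'k::ring_1" where
  "y_st d mu s t = ga_mult d (ga_mult d (ga_delta (inv (dperm d mu s))) (y_lam d mu)) (ga_delta (dperm d mu t))"

definition cell_span :: "nat \<Rightarrow> (nat list \<Rightarrow> bool) \<Rightarrow> ((nat \<Rightarrow> nat) \<Rightarrow> 'k::ring_1) set" where
  "cell_span d P = {x. \<exists>S c. finite S \<and>
      S \<subseteq> {(mu, s, t). P mu \<and> tableau d mu s \<and> tableau d mu t \<and> standard mu s \<and> standard mu t} \<and>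
      x = (\<lambda>u. \<Sum>(mu, s, t)\<in>S. c (mu, s, t) * y_st d mu s t u)}"

definition dom_le :: "nat list \<Rightarrow> nat list \<Rightarrow> bool" where
  "dom_le mu nu \<longleftrightarrow> (\<forall>k. sum_list (take k mu) \<le> sum_list (take k nu))"

definition hook :: "nat \<Rightarrow> nat \<Rightarrow> nat list" where
  "hook d r = Suc r # replicate (d - r - 1) 1"

text \<open>Basis of V^{\<otimes> m}: tuples (v_{j_1},...,v_{j_m}) with 1 \<le> j_i \<le> n.\<close>
definition tuples :: "nat \<Rightarrow> nat \<Rightarrow> nat list set" where
  "tuples n m = {j. length j = m \<and> set j \<subseteq> {1..n}}"

text \<open>Coordinates (w.r.t. the tensor basis) of x applied to basis vector v_j, for x in kG.\<close>
definition tensor_action :: "(nat \<Rightarrow> nat) set \<Rightarrow> ((nat \<Rightarrow> nat) \<Rightarrow> 'k::ring_1) \<Rightarrow> nat list \<Rightarrow> nat list \<Rightarrow> 'k" where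
  "tensor_action G x j = (\<lambda>j'. \<Sum>w | w \<in> G \<and> map w j = j'. x w)"

text \<open>For eps = 0 the group is W_n acting on V^{\<otimes> r};
  for eps = 1/2 it is W_{n-1} = {w in W_n. w n = n} acting on V^{\<otimes> r} \<otimes> v_n
  inside V^{\<otimes>(r+1)}.\<close>
definition Phi_kernel :: "nat \<Rightarrow> nat \<Rightarrow> real \<Rightarrow> ((nat \<Rightarrow> nat) \<Rightarrow> 'k::ring_1) set" where
  "Phi_kernel n r eps =
    (if eps = 0 then
       {x. (\<forall>w. w \<notin> Wsym n \<longrightarrow> x w = 0) \<and>
           (\<forall>j\<in>tuples n r. tensor_action (Wsym n) x j = (\<lambda>_. 0))}
     else
       {x. (\<forall>w. w \<notin> {w \<in> Wsym n. w n = n} \<longrightarrow> x w = 0) \<and>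
           (\<forall>j\<in>tuples n r. tensor_action {w \<in> Wsym n. w n = n} x (j @ [n]) = (\<lambda>_. 0))})"

end

theory Submission
  imports Defs
begin

lemma young_Cons: "young (a # mu) = (\<lambda>j. (0, j)) ` {..<a} \<union> (\<lambda>(i, j). (Suc i, j)) ` young mu"
  unfolding young_def by (auto simp: image_iff nth_Cons split: nat.splits) 

lemma rr_Cons0: "row_reading (a # mu) (0, j) = j + 1"
  by (simp add: row_reading_def)
lemma rr_ConsS: "row_reading (a # mu) (Suc i, j) = a + row_reading mu (i, j)"
  by (simp add: row_reading_def)

lemma rr_bij: "bij_betw (row_reading mu) (young mu) {1..sum_list mu}"
proof (induction mu)
  case Nil
  then show ?case by (simp add: young_def bij_betw_def)
next
  case (Cons a mu)
  have b1: "bij_betw (row_reading (a # mu)) ((\<lambda>j. (0, j)) ` {..<a}) {1..a}"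
    unfolding bij_betw_def
  proof
    show "inj_on (row_reading (a # mu)) ((\<lambda>j. (0, j)) ` {..<a})"
      by (auto simp: inj_on_def rr_Cons0)
    show "row_reading (a # mu) ` (\<lambda>j. (0, j)) ` {..<a} = {1..a}"
    proof
      show "row_reading (a # mu) ` (\<lambda>j. (0, j)) ` {..<a} \<subseteq> {1..a}" by (auto simp: rr_Cons0)
      show "{1..a} \<subseteq> row_reading (a # mu) ` (\<lambda>j. (0, j)) ` {..<a}"
      proof
        fix k assume k: "k \<in> {1..a}"
        then have "k = row_reading (a # mu) (0, k - 1)" by (simp add: rr_Cons0)
        with k show "k \<in> row_reading (a # mu) ` (\<lambda>j. (0, j)) ` {..<a}" by force
      qed
    qed
  qed
  have b2: "bij_betw (row_reading (a # mu)) ((\<lambda>(i, j). (Suc i, j)) ` young mu) ((+) a ` {1..sum_list mu})"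
  proof -
    have i1: "bij_betw (\<lambda>(i, j). (Suc i, j)) (young mu) ((\<lambda>(i, j). (Suc i, j)) ` young mu)"
      by (rule inj_on_imp_bij_betw) (auto simp: inj_on_def)
    have i2: "bij_betw ((+) a) {1..sum_list mu} ((+) a ` {1..sum_list mu})"
      by (rule inj_on_imp_bij_betw) (auto simp: inj_on_def)
    have "bij_betw ((+) a \<circ> row_reading mu) (young mu) ((+) a ` {1..sum_list mu})"
      using Cons.IH i2 by (rule bij_betw_trans)
    moreover have "(+) a \<circ> row_reading mu = row_reading (a # mu) \<circ> (\<lambda>(i, j). (Suc i, j))"
      by (auto simp: rr_ConsS)
    ultimately have "bij_betw (row_reading (a # mu) \<circ> (\<lambda>(i, j). (Suc i, j))) (young mu) ((+) a ` {1..sum_list mu})"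
      by simp
    then show ?thesis using i1 bij_betw_comp_iff2[of "\<lambda>(i, j). (Suc i, j)" "young mu"] 
      by (metis bij_betw_imp_surj_on bij_betw_comp_iff)
  qed
  have "bij_betw (row_reading (a # mu)) ((\<lambda>j. (0, j)) ` {..<a} \<union> (\<lambda>(i, j). (Suc i, j)) ` young mu)
     ({1..a} \<union> (+) a ` {1..sum_list mu})"
    by (rule bij_betw_combine[OF b1 b2]) auto
  moreover have "{1..a} \<union> (+) a ` {1..sum_list mu} = {1..sum_list (a # mu)}"
  proof -
    have "(+) a ` {1..sum_list mu} = {a+1..a + sum_list mu}" by (simp add: image_add_atLeastAtMost)
    then show ?thesis by auto
  qed
  ultimately show ?case by (simp add: young_Cons)
qed


lemma rr_bij_d: "is_partition d mu \<Longrightarrow> bij_betw (row_reading mu) (young mu) {1..d}"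
  using rr_bij[of mu] by (simp add: is_partition_def)

lemma dperm_perm:
  assumes "is_partition d mu" "tableau d mu t"
  shows "dperm d mu t permutes {1..d}"
proof (rule bij_imp_permutes)
  have b: "bij_betw (inv_into (young mu) (row_reading mu)) {1..d} (young mu)"
    using rr_bij_d[OF assms(1)] by (rule bij_betw_inv_into)
  have "bij_betw (t \<circ> inv_into (young mu) (row_reading mu)) {1..d} {1..d}"
    using b assms(2) unfolding tableau_def by (rule bij_betw_trans)
  show "bij_betw (dperm d mu t) {1..d} {1..d}"
  proof -
    have "bij_betw (dperm d mu t) {1..d} {1..d} = bij_betw (t \<circ> inv_into (young mu) (row_reading mu)) {1..d} {1..d}"
      by (rule bij_betw_cong) (simp add: dperm_def)
    with \<open>bij_betw (t \<circ> inv_into (young mu) (row_reading mu)) {1..d} {1..d}\<close> show ?thesis by simp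
  qed
  show "\<And>x. x \<notin> {1..d} \<Longrightarrow> dperm d mu t x = x" by (auto simp: dperm_def)
qed

lemma swap_row_stab:
  assumes "is_partition d mu" "a \<in> {1..d}" "b \<in> {1..d}"
    and row: "fst (inv_into (young mu) (row_reading mu) a) = fst (inv_into (young mu) (row_reading mu) b)"
  shows "transpose a b \<in> row_stab d mu"
  unfolding row_stab_def Wsym_def
proof (intro CollectI conjI ballI)
  show "transpose a b permutes {1..d}" using assms by (simp add: permutes_swap_id)
  fix c assume c: "c \<in> young mu"
  have inj: "inj_on (row_reading mu) (young mu)" using rr_bij_d[OF assms(1)] bij_betw_def by blast
  have e: "inv_into (young mu) (row_reading mu) (row_reading mu c) = c" using inv_into_f_f[OF inj c] .
  show "fst (inv_into (young mu) (row_reading mu) (transpose a b (row_reading mu c))) = fst c"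
  proof -
    consider "row_reading mu c = a" | "row_reading mu c = b" | "row_reading mu c \<noteq> a" "row_reading mu c \<noteq> b" by blast
    then show ?thesis
    proof cases
      case 1 then have "transpose a b (row_reading mu c) = b" by simp
      then show ?thesis using e row 1 by metis
    next
      case 2 then have "transpose a b (row_reading mu c) = a" by simp
      then show ?thesis using e row 2 by metis
    next
      case 3 then have "transpose a b (row_reading mu c) = row_reading mu c" by simp
      then show ?thesis using e by simp
    qed
  qed
qed

lemma row_stab_mult:
  assumes "is_partition d mu" "\<tau> \<in> row_stab d mu" "u \<in> row_stab d mu"
  shows "u \<circ> \<tau> \<in> row_stab d mu"
  unfolding row_stab_def Wsym_def
proof (intro CollectI conjI ballI)
  show "u \<circ> \<tau> permutes {1..d}" using assms by (auto simp: row_stab_def Wsym_def intro: permutes_compose)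
  fix c assume c: "c \<in> young mu"
  have bij: "bij_betw (row_reading mu) (young mu) {1..d}" using rr_bij_d[OF assms(1)] .
  have inj: "inj_on (row_reading mu) (young mu)" using bij bij_betw_def by blast
  let ?c' = "inv_into (young mu) (row_reading mu) (\<tau> (row_reading mu c))"
  have "\<tau> permutes {1..d}" using assms(2) by (simp add: row_stab_def Wsym_def)
  then have "\<tau> (row_reading mu c) \<in> {1..d}" using c bij by (meson bij_betw_apply permutes_in_image)
  then have c'y: "?c' \<in> young mu" and rc': "row_reading mu ?c' = \<tau> (row_reading mu c)"
    using bij by (auto simp: bij_betw_def inv_into_into f_inv_into_f)
  have f1: "fst ?c' = fst c" using assms(2) c by (simp add: row_stab_def)
  have "fst (inv_into (young mu) (row_reading mu) (u (row_reading mu ?c'))) = fst ?c'"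
    using assms(3) c'y by (simp add: row_stab_def)
  then show "fst (inv_into (young mu) (row_reading mu) ((u \<circ> \<tau>) (row_reading mu c))) = fst c"
    using rc' f1 by simp
qed

lemma y_lam_swap:
  assumes "is_partition d mu" "a \<in> {1..d}" "b \<in> {1..d}" "a \<noteq> b"
    and row: "fst (inv_into (young mu) (row_reading mu) a) = fst (inv_into (young mu) (row_reading mu) b)"
  shows "(y_lam d mu (u \<circ> transpose a b) :: 'k::ring_1) = - y_lam d mu u"
proof -
  have t: "transpose a b \<in> row_stab d mu" using swap_row_stab[OF assms(1,2,3) row] .
  have iff: "u \<circ> transpose a b \<in> row_stab d mu \<longleftrightarrow> u \<in> row_stab d mu"
  proof
    assume "u \<circ> transpose a b \<in> row_stab d mu"
    from row_stab_mult[OF assms(1) t this] show "u \<in> row_stab d mu" by (simp add: comp_assoc)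
  qed (rule row_stab_mult[OF assms(1) t])
  show ?thesis
  proof (cases "u \<in> row_stab d mu")
    case True
    then have "permutation u" by (auto simp: row_stab_def Wsym_def permutes_imp_permutation[of "{1..d}"])
    then have "sign (u \<circ> transpose a b) = - sign u"
      using assms(4) by (simp add: sign_compose sign_swap_id permutation_swap_id)
    then show ?thesis using True iff by (simp add: y_lam_def)
  next
    case False then show ?thesis using iff by (simp add: y_lam_def)
  qed
qed


lemma finW: "finite (Wsym d)"
  unfolding Wsym_def by (rule finite_permutations) simp

lemma y_st_formula:
  assumes p: "dperm d mu s permutes {1..d}" and q: "dperm d mu t permutes {1..d}"
  shows "(y_st d mu s t u :: 'k::ring_1) = y_lam d mu (dperm d mu s \<circ> u \<circ> inv (dperm d mu t))"
proof -
  define P where "P = dperm d mu s"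
  define Q where "Q = dperm d mu t"
  have p': "P permutes {1..d}" and q': "Q permutes {1..d}" using p q by (simp_all add: P_def Q_def)
  have ip: "inv P \<in> Wsym d" using permutes_inv[OF p'] by (simp add: Wsym_def)
  have iip: "inv (inv P) = P" using p' by (simp add: permutes_inv_inv)
  have Y1: "ga_mult d (ga_delta (inv P)) (y_lam d mu) v = (y_lam d mu (P \<circ> v) :: 'k)" for v
  proof -
    have "ga_mult d (ga_delta (inv P)) (y_lam d mu) v
       = (\<Sum>w\<in>Wsym d. if w = inv P then (y_lam d mu (inv w \<circ> v) :: 'k) else 0)"
      unfolding ga_mult_def ga_delta_def by (rule sum.cong) auto
    also have "\<dots> = y_lam d mu (P \<circ> v)" using ip iip using finW by (simp add: sum.delta)
    finally show ?thesis .
  qed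
  have bq: "bij Q" using q' by (rule permutes_bij)
  have key: "(inv w \<circ> u = Q) \<longleftrightarrow> w = u \<circ> inv Q" if "w \<in> Wsym d" for w
  proof -
    have bw: "bij w" using that by (simp add: Wsym_def permutes_bij)
    have w1: "w \<circ> inv w = id" using bw by (simp add: fun_eq_iff bij_is_surj surj_f_inv_f)
    have w2: "inv w \<circ> w = id" using bw by (simp add: fun_eq_iff bij_is_inj inv_f_f)
    have q1: "Q \<circ> inv Q = id" using bq by (simp add: fun_eq_iff bij_is_surj surj_f_inv_f)
    have q2: "inv Q \<circ> Q = id" using bq by (simp add: fun_eq_iff bij_is_inj inv_f_f)
    show ?thesis
    proof
      assume "inv w \<circ> u = Q"
      then have "w \<circ> (inv w \<circ> u) = w \<circ> Q" by simp
      then have "u = w \<circ> Q" by (simp add: comp_assoc[symmetric] w1)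
      then have "u \<circ> inv Q = w \<circ> (Q \<circ> inv Q)" by (simp add: comp_assoc)
      then show "w = u \<circ> inv Q" by (simp add: q1)
    next
      assume "w = u \<circ> inv Q"
      then have "w \<circ> Q = u \<circ> (inv Q \<circ> Q)" by (simp add: comp_assoc)
      then have "u = w \<circ> Q" by (simp add: q2)
      then have "inv w \<circ> u = (inv w \<circ> w) \<circ> Q" by (simp add: comp_assoc)
      then show "inv w \<circ> u = Q" by (simp add: w2)
    qed
  qed
  have "y_st d mu s t u = (\<Sum>w\<in>Wsym d. if w = u \<circ> inv Q then (y_lam d mu (P \<circ> w) :: 'k) else 0)"
    unfolding y_st_def P_def[symmetric] Q_def[symmetric] ga_mult_def[of d _ "ga_delta Q"]
    apply (rule sum.cong, simp)
    using Y1 key by (auto simp: ga_delta_def)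
  also have "\<dots> = (if u \<circ> inv Q \<in> Wsym d then y_lam d mu (P \<circ> (u \<circ> inv Q)) else 0)"
    using finW by (simp add: sum.delta)
  also have "\<dots> = y_lam d mu (P \<circ> u \<circ> inv Q)"
  proof (cases "u \<circ> inv Q \<in> Wsym d")
    case True then show ?thesis by (simp add: comp_assoc)
  next
    case False
    have "P \<circ> u \<circ> inv Q \<notin> Wsym d"
    proof
      assume "P \<circ> u \<circ> inv Q \<in> Wsym d"
      then have "inv P \<circ> (P \<circ> u \<circ> inv Q) \<in> Wsym d" using ip by (simp add: Wsym_def permutes_compose)
      moreover have "inv P \<circ> (P \<circ> u \<circ> inv Q) = u \<circ> inv Q"
        using p' by (simp add: comp_assoc[symmetric] permutes_inv_o)
      ultimately show False using False by simp
    qed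
    then have "P \<circ> u \<circ> inv Q \<notin> row_stab d mu" by (auto simp: row_stab_def)
    then show ?thesis using False by (simp add: y_lam_def)
  qed
  finally show ?thesis by (simp add: P_def Q_def)
qed

lemma cancel_sum:
  fixes x :: "(nat \<Rightarrow> nat) \<Rightarrow> 'k::ring_1"
  assumes fin: "finite A" and cl: "\<And>w. w \<in> A \<Longrightarrow> w \<circ> transpose a b \<in> A"
    and ne: "\<And>w. w \<in> A \<Longrightarrow> w a \<noteq> w b"
    and anti: "\<And>w. w \<in> A \<Longrightarrow> x (w \<circ> transpose a b) = - x w"
  shows "(\<Sum>w\<in>A. x w) = 0"
proof -
  let ?T = "\<lambda>w. w \<circ> transpose a b"
  define A1 where "A1 = {w\<in>A. w a < w b}"
  have invol: "?T (?T w) = w" for w by (simp add: comp_assoc)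
  have A2: "?T ` A1 = {w\<in>A. w b < w a}"
  proof
    show "?T ` A1 \<subseteq> {w\<in>A. w b < w a}" using cl by (auto simp: A1_def)
    show "{w\<in>A. w b < w a} \<subseteq> ?T ` A1"
    proof
      fix w assume w: "w \<in> {w\<in>A. w b < w a}"
      then have "?T w \<in> A1" using cl by (auto simp: A1_def)
      then show "w \<in> ?T ` A1" using invol[of w] by (metis image_eqI)
    qed
  qed
  have Au: "A = A1 \<union> ?T ` A1" using ne A2 by (auto simp: A1_def) (meson linorder_neqE_nat)
  have dj: "A1 \<inter> ?T ` A1 = {}" using A2 by (auto simp: A1_def)
  have inj: "inj_on ?T A1" by (metis (no_types, lifting) inj_onI invol)
  have "(\<Sum>w\<in>A. x w) = (\<Sum>w\<in>A1. x w) + (\<Sum>w\<in>?T ` A1. x w)"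
    using fin Au dj by (metis finite_Un sum.union_disjoint)
  also have "(\<Sum>w\<in>?T ` A1. x w) = (\<Sum>w\<in>A1. x (?T w))" using inj by (simp add: sum.reindex)
  also have "\<dots> = (\<Sum>w\<in>A1. - x w)" by (rule sum.cong) (auto simp: A1_def anti)
  finally show ?thesis by (simp add: sum_negf)
qed

lemma sum_ge_length: "\<forall>p\<in>set xs. 0 < p \<Longrightarrow> length xs \<le> sum_list (xs :: nat list)"
  by (induction xs) auto

lemma hook_dom:
  assumes "is_partition d mu" "r + 1 \<le> d" "d - r \<le> length mu"
  shows "dom_le mu (hook d r)"
  unfolding dom_le_def
proof
  fix k
  have pos: "\<forall>p\<in>set (drop k mu). 0 < p" using assms(1) by (auto simp: is_partition_def dest: in_set_dropD)
  have "sum_list (take k mu) + sum_list (drop k mu) = d"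
    using assms(1) by (metis is_partition_def sum_list_append append_take_drop_id)
  moreover have "length mu - k \<le> sum_list (drop k mu)" using sum_ge_length[OF pos] by simp
  ultimately have m: "sum_list (take k mu) \<le> d" "sum_list (take k mu) \<le> r + k" using assms(3) by linarith+
  show "sum_list (take k mu) \<le> sum_list (take k (hook d r))"
  proof (cases k)
    case 0 then show ?thesis by simp
  next
    case (Suc k')
    have "sum_list (take k (hook d r)) = Suc r + min k' (d - r - 1)"
      by (simp add: hook_def Suc sum_list_replicate)
    then show ?thesis using m Suc assms(2) by linarith
  qed
qed


lemma y_st_support:
  assumes part: "is_partition d mu" and ts: "tableau d mu s" and tt: "tableau d mu t"
    and w: "w \<notin> Wsym d"
  shows "(y_st d mu s t w :: 'k::ring_1) = 0"
proof -
  define P where "P = dperm d mu s"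
  define Q where "Q = dperm d mu t"
  have p: "P permutes {1..d}" and q: "Q permutes {1..d}"
    using dperm_perm[OF part ts] dperm_perm[OF part tt] by (simp_all add: P_def Q_def)
  have "P \<circ> w \<circ> inv Q \<notin> Wsym d"
  proof
    assume "P \<circ> w \<circ> inv Q \<in> Wsym d"
    then have "inv P \<circ> (P \<circ> w \<circ> inv Q) \<circ> Q permutes {1..d}"
      using p q by (simp add: Wsym_def permutes_compose permutes_inv)
    moreover have "inv P \<circ> (P \<circ> w \<circ> inv Q) \<circ> Q = (inv P \<circ> P) \<circ> w \<circ> (inv Q \<circ> Q)"
      by (simp add: comp_assoc)
    ultimately have "w permutes {1..d}" using permutes_inv_o[OF p] permutes_inv_o[OF q] by simp
    then show False using w by (simp add: Wsym_def)
  qed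
  then have "P \<circ> w \<circ> inv Q \<notin> row_stab d mu" by (auto simp: row_stab_def)
  then show ?thesis
    using y_st_formula[of d mu s t w] p q by (simp add: P_def Q_def y_lam_def)
qed

lemma y_st_kernel:
  fixes G :: "(nat \<Rightarrow> nat) set" and j jj j' :: "nat list"
  assumes part: "is_partition d mu" and ts: "tableau d mu s" and tt: "tableau d mu t"
    and nd: "\<not> dom_le mu (hook d r)" and dr: "r + 1 \<le> d"
    and finG: "finite G" and Ginj: "\<And>w. w \<in> G \<Longrightarrow> inj w"
    and Gcl: "\<And>w \<sigma>. w \<in> G \<Longrightarrow> \<sigma> permutes {1..d} \<Longrightarrow> w \<circ> \<sigma> \<in> G"
    and lj: "length j \<le> r" and jj: "\<And>v. v \<in> set jj \<Longrightarrow> v \<notin> {1..d} \<or> v \<in> set j"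
  shows "(\<Sum>w | w \<in> G \<and> map w jj = j'. (y_st d mu s t w :: 'k::ring_1)) = 0"
proof -
  have lm: "length mu < d - r" using hook_dom[OF part _] dr nd by (meson Suc_eq_plus1 not_le)
  define P where "P = dperm d mu s"
  define Q where "Q = dperm d mu t"
  have p: "P permutes {1..d}" and q: "Q permutes {1..d}"
    using dperm_perm[OF part ts] dperm_perm[OF part tt] by (simp_all add: P_def Q_def)
  have bq: "bij Q" using q by (rule permutes_bij)
  define U where "U = {1..d} - Q ` set j"
  have "card (Q ` set j) \<le> r" using lj card_image_le[of "set j" Q] card_length[of j] by (simp add: le_trans)
  then have cU: "d - r \<le> card U"
    unfolding U_def using diff_card_le_card_Diff[of "Q ` set j" "{1..d}"] by simp
  define f where "f = (\<lambda>k. fst (inv_into (young mu) (row_reading mu) k))"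
  have bi: "bij_betw (inv_into (young mu) (row_reading mu)) {1..d} (young mu)"
    using rr_bij_d[OF part] by (rule bij_betw_inv_into)
  have fU: "f ` U \<subseteq> {..<length mu}"
  proof
    fix y assume "y \<in> f ` U"
    then obtain k where k: "k \<in> U" "y = f k" by blast
    then have "inv_into (young mu) (row_reading mu) k \<in> young mu"
      using bi by (auto simp: U_def bij_betw_apply)
    then show "y \<in> {..<length mu}" using k by (auto simp: f_def young_def)
  qed
  have "\<not> inj_on f U"
  proof
    assume "inj_on f U"
    from card_inj_on_le[OF this fU] have "card U \<le> length mu" by simp
    with cU lm show False by linarith
  qed
  then obtain a b where ab: "a \<in> U" "b \<in> U" "a \<noteq> b" "f a = f b" by (auto simp: inj_on_def)
  have a1: "a \<in> {1..d}" "b \<in> {1..d}" using ab by (auto simp: U_def)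
  define a' where "a' = inv Q a"
  define b' where "b' = inv Q b"
  have Qa: "Q a' = a" "Q b' = b" using bq by (simp_all add: a'_def b'_def bij_is_surj surj_f_inv_f)
  have a'd: "a' \<in> {1..d}" "b' \<in> {1..d}"
    using a1 permutes_in_image[OF permutes_inv[OF q]] unfolding a'_def b'_def by blast+
  have a'ne: "a' \<noteq> b'" using Qa ab(3) by auto
  have a'j: "a' \<notin> set j" "b' \<notin> set j" using Qa ab(1,2) by (auto simp: U_def)
  have conj: "inv Q \<circ> transpose a b = transpose a' b' \<circ> inv Q"
  proof
    fix x
    have "transpose a b (Q (inv Q x)) = Q (transpose a' b' (inv Q x))"
      unfolding a'_def b'_def by (rule transpose_apply_commute[OF bq])
    then have "transpose a b x = Q (transpose a' b' (inv Q x))"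
      using bq by (simp add: bij_is_surj surj_f_inv_f)
    then have "inv Q (transpose a b x) = transpose a' b' (inv Q x)"
      using bq by (simp add: bij_is_inj inv_f_f)
    then show "(inv Q \<circ> transpose a b) x = (transpose a' b' \<circ> inv Q) x" by simp
  qed
  have anti: "(y_st d mu s t (w \<circ> transpose a' b') :: 'k) = - y_st d mu s t w" for w
  proof -
    have "P \<circ> (w \<circ> transpose a' b') \<circ> inv Q = (P \<circ> w) \<circ> (transpose a' b' \<circ> inv Q)"
      by (simp add: comp_assoc)
    also have "\<dots> = (P \<circ> w \<circ> inv Q) \<circ> transpose a b" by (simp add: conj[symmetric] comp_assoc)
    finally have e: "P \<circ> (w \<circ> transpose a' b') \<circ> inv Q = (P \<circ> w \<circ> inv Q) \<circ> transpose a b" .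
    have "(y_lam d mu ((P \<circ> w \<circ> inv Q) \<circ> transpose a b) :: 'k) = - y_lam d mu (P \<circ> w \<circ> inv Q)"
      by (rule y_lam_swap[OF part a1 ab(3)]) (use ab(4) in \<open>simp add: f_def\<close>)
    moreover have f: "\<And>u. (y_st d mu s t u :: 'k) = y_lam d mu (P \<circ> u \<circ> inv Q)"
      using y_st_formula[of d mu s t] p q unfolding P_def Q_def by blast
    ultimately show ?thesis by (simp only: f e)
  qed
  have tp: "transpose a' b' permutes {1..d}" using a'd by (simp add: permutes_swap_id)
  show ?thesis
  proof (rule cancel_sum)
    show "finite {w. w \<in> G \<and> map w jj = j'}" using finG by simp
  next
    fix w assume w: "w \<in> {w. w \<in> G \<and> map w jj = j'}"
    have mm: "map (w \<circ> transpose a' b') jj = map w jj"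
    proof (rule map_cong[OF refl])
      fix v assume "v \<in> set jj"
      then have "v \<noteq> a'" "v \<noteq> b'" using jj a'd a'j by blast+
      then show "(w \<circ> transpose a' b') v = w v" by simp
    qed
    have "map (w \<circ> transpose a' b') jj = j'" using w mm by (metis (mono_tags, lifting) mem_Collect_eq)
    then show "w \<circ> transpose a' b' \<in> {w. w \<in> G \<and> map w jj = j'}" using w Gcl[OF _ tp] by blast
    show "w a' \<noteq> w b'" using w Ginj a'ne by (auto dest: injD)
    show "(y_st d mu s t (w \<circ> transpose a' b') :: 'k) = - y_st d mu s t w" by (rule anti)
  qed
qed


lemma main_helper:
  fixes G :: "(nat \<Rightarrow> nat) set" and J :: "nat list \<Rightarrow> nat list" and x :: "(nat \<Rightarrow> nat) \<Rightarrow> 'k::ring_1"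
  assumes finG: "finite G" and Ginj: "\<And>w. w \<in> G \<Longrightarrow> inj w"
    and Gcl: "\<And>w \<sigma>. w \<in> G \<Longrightarrow> \<sigma> permutes {1..d} \<Longrightarrow> w \<circ> \<sigma> \<in> G"
    and WG: "Wsym d \<subseteq> G" and dr: "r + 1 \<le> d"
    and Jc: "\<And>j v. j \<in> tuples n r \<Longrightarrow> v \<in> set (J j) \<Longrightarrow> v \<notin> {1..d} \<or> v \<in> set j"
    and x: "x \<in> cell_span d (\<lambda>mu. is_partition d mu \<and> \<not> dom_le mu (hook d r))"
  shows "(\<forall>w. w \<notin> G \<longrightarrow> x w = 0) \<and> (\<forall>j\<in>tuples n r. tensor_action G x (J j) = (\<lambda>_. 0))"
proof -
  obtain S c where fS: "finite S"
    and SS: "S \<subseteq> {(mu, s, t). (is_partition d mu \<and> \<not> dom_le mu (hook d r)) \<and> tableau d mu s \<and> tableau d mu t \<and> standard mu s \<and> standard mu t}"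
    and xe: "x = (\<lambda>u. \<Sum>(mu, s, t)\<in>S. c (mu, s, t) * y_st d mu s t u)"
    using x unfolding cell_span_def by blast
  have mem: "is_partition d mu \<and> \<not> dom_le mu (hook d r) \<and> tableau d mu s \<and> tableau d mu t"
    if "(mu, s, t) \<in> S" for mu s t using SS that by blast
  have part1: "\<forall>w. w \<notin> G \<longrightarrow> x w = 0"
  proof (intro allI impI)
    fix w assume "w \<notin> G"
    then have w: "w \<notin> Wsym d" using WG by blast
    show "x w = 0" unfolding xe
    proof (rule sum.neutral, clarify)
      fix mu s t assume "(mu, s, t) \<in> S"
      note m = mem[OF this]
      have "(y_st d mu s t w :: 'k) = 0" using m by (intro y_st_support[OF _ _ _ w]) auto
      then show "c (mu, s, t) * y_st d mu s t w = 0" by simp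
    qed
  qed
  have part2: "tensor_action G x (J j) = (\<lambda>_. 0)" if j: "j \<in> tuples n r" for j
  proof
    fix j'
    have lj: "length j \<le> r" using j by (simp add: tuples_def)
    have "tensor_action G x (J j) j' = (\<Sum>w | w \<in> G \<and> map w (J j) = j'. \<Sum>(mu, s, t)\<in>S. c (mu, s, t) * y_st d mu s t w)"
      by (simp add: tensor_action_def xe)
    also have "\<dots> = (\<Sum>(mu, s, t)\<in>S. \<Sum>w | w \<in> G \<and> map w (J j) = j'. c (mu, s, t) * y_st d mu s t w)"
      by (subst sum.swap) (simp add: case_prod_beta)
    also have "\<dots> = (\<Sum>(mu, s, t)\<in>S. c (mu, s, t) * (\<Sum>w | w \<in> G \<and> map w (J j) = j'. y_st d mu s t w))"
      by (simp add: sum_distrib_left)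
    also have "\<dots> = 0"
    proof (rule sum.neutral, safe)
      fix mu s t assume "(mu, s, t) \<in> S"
      note m = mem[OF this]
      have "(\<Sum>w | w \<in> G \<and> map w (J j) = j'. (y_st d mu s t w :: 'k)) = 0"
        by (rule y_st_kernel[where r = r and j = j]) (use m dr finG Ginj Gcl lj Jc[OF j] in \<open>auto\<close>)
      then show "c (mu, s, t) * (\<Sum>w | w \<in> G \<and> map w (J j) = j'. y_st d mu s t w) = 0" by simp
    qed
    finally show "tensor_action G x (J j) j' = 0" .
  qed
  show ?thesis using part1 part2 by blast
qed

theorem proposition7p1:
  fixes n r d :: nat and eps :: real
  assumes "0 < n" and "0 < r" and "eps \<in> {0, 1/2}"
    and "real d = real n - 2 * eps" and "d > r + 1"
  shows "(cell_span d (\<lambda>mu. is_partition d mu \<and> \<not> dom_le mu (hook d r))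
           :: ((nat \<Rightarrow> nat) \<Rightarrow> 'k::ring_1) set) \<subseteq> Phi_kernel n r eps"
proof
  fix x :: "(nat \<Rightarrow> nat) \<Rightarrow> 'k"
  assume x: "x \<in> cell_span d (\<lambda>mu. is_partition d mu \<and> \<not> dom_le mu (hook d r))"
  have dr: "r + 1 \<le> d" using assms(5) by simp
  have finWn: "finite (Wsym n)" by (rule finW)
  show "x \<in> Phi_kernel n r eps"
  proof (cases "eps = 0")
    case True
    then have dn: "d = n" using assms(4) by simp
    have "(\<forall>w. w \<notin> Wsym n \<longrightarrow> x w = 0) \<and> (\<forall>j\<in>tuples n r. tensor_action (Wsym n) x (id j) = (\<lambda>_. 0))"
      by (rule main_helper[where d = d and r = r and n = n])
        (use finWn dr x dn in \<open>auto simp: Wsym_def permutes_inj permutes_compose\<close>)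
    then show ?thesis using True by (simp add: Phi_kernel_def)
  next
    case False
    then have e: "eps = 1/2" using assms(3) by simp
    then have dn: "n = Suc d" using assms(4) by simp
    let ?G = "{w \<in> Wsym n. w n = n}"
    have fG: "finite ?G" using finWn by simp
    have cl: "w \<circ> \<sigma> \<in> ?G" if "w \<in> ?G" "\<sigma> permutes {1..d}" for w \<sigma>
    proof -
      have "\<sigma> permutes {1..n}" using that(2) dn by (auto intro: permutes_subset)
      moreover have "\<sigma> n = n" using that(2) dn by (simp add: permutes_not_in)
      ultimately show ?thesis using that(1) by (simp add: Wsym_def permutes_compose)
    qed
    have WG: "Wsym d \<subseteq> ?G"
    proof
      fix w assume "w \<in> Wsym d"
      then have w: "w permutes {1..d}" by (simp add: Wsym_def)
      then have "w permutes {1..n}" using dn by (auto intro: permutes_subset)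
      moreover have "w n = n" using w dn by (simp add: permutes_not_in)
      ultimately show "w \<in> ?G" by (simp add: Wsym_def)
    qed
    have "(\<forall>w. w \<notin> ?G \<longrightarrow> x w = 0) \<and> (\<forall>j\<in>tuples n r. tensor_action ?G x ((\<lambda>j. j @ [n]) j) = (\<lambda>_. 0))"
      by (rule main_helper[where d = d and r = r and n = n])
        (use fG cl WG dr x dn in \<open>auto simp: Wsym_def permutes_inj\<close>)
    then show ?thesis using False by (simp add: Phi_kernel_def)
  qed
qed

end
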